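(* Consider the single unicast index coding problem $\mathbb I$ with six messages $W_1,\dots,W_6$ and six receivers, where receiver $j$ demands only $W_j$ and has side information $S(j)={\cal W}\setminus(\{W_j\}\cup I_j)$, with $I_1=\{W_4\}$, $I_2=\{W_1,W_3\}$, $I_3=\{W_1\}$, $I_4=\emptyset$, $I_5=\{W_1,W_3,W_4\}$, $I_6=\{W_1,W_2,W_4\}$ (so $Interf_j(j)=I_j$). Then (a) $\mathbb I$ has no acyclic subset of messages of size $4$, and (b) $\mathbb I$ admits no valid scalar linear index code of length $3$ over any finite field.
   Context: Index coding setup: An index coding problem $\mathbb I$ over a finite field $\mathbb F$ consists of a set of messages ${\cal W}=\{W_1,\dots,W_n\}$ (each message is a symbol of $\mathbb F$ in the scalar setting), a set of receivers $[1:T]$, and for each receiver $j$ a demand set $D(j)\subseteq{\cal W}$ and a side-information set $S(j)\subseteq {\cal W}\setminus D(j)$. For a receiver $j$ and $W_k\in D(j)$, the interfering set is $Interf_k(j)={\cal W}\setminus(\{W_k\}\cup S(j))$. A scalar linear index code of length $L$ over $\mathbb F$ is an assignment of vectors $V_1,\dots,V_n\in\mathbb F^L$ to the messages; the source broadcasts $\sum_{i=1}^n V_iW_i\in\mathbb F^L$, and the code is valid if every receiver $j$ can recover every message of $D(j)$ from the broadcast codeword and the messages in $S(j)$. An acyclic subset of messages of size $4$ is a set of four distinct messages $W_{i_1},W_{i_2},W_{i_3},W_{i_4}$ such that for each $k\in\{1,2,3,4\}$ there is a receiver $j_k$ demanding $W_{i_k}$ with $\{W_{i_{k'}}:k'<k\}\subseteq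 Interf_{i_k}(j_k)$. *)

theory Defs
  imports Main
begin

text \<open>General index coding setup. Messages are indexed by 1..n, receivers by 1..T.
  D j is the demand set and S j the side-information set of receiver j (sets of message indices).\<close>

definition Interf :: "nat \<Rightarrow> (nat \<Rightarrow> nat set) \<Rightarrow> nat \<Rightarrow> nat \<Rightarrow> nat set" where
  "Interf n S j k = {1..n} - ({k} \<union> S j)"

definition has_acyclic_subset4 ::
  "nat \<Rightarrow> nat \<Rightarrow> (nat \<Rightarrow> nat set) \<Rightarrow> (nat \<Rightarrow> nat set) \<Rightarrow> bool" where
  "has_acyclic_subset4 n T D S \<longleftrightarrow>
     (\<exists>i :: nat \<Rightarrow> nat. inj_on i {..<4} \<and> i ` {..<4} \<subseteq> {1..n} \<and>
        (\<forall>k<4. \<exists>j\<in>{1..T}. i k \<in> D j \<and> i ` {..<k} \<subseteq> Interf n S j (i k)))"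

text \<open>Broadcast codeword of a scalar linear code of length L: coordinate l < L of
  sum over i of V i * W i, where V i is the vector (V i 0, ..., V i (L-1)) in F^L.\<close>

definition codeword :: "nat \<Rightarrow> nat \<Rightarrow> (nat \<Rightarrow> nat \<Rightarrow> 'a::field) \<Rightarrow> (nat \<Rightarrow> 'a) \<Rightarrow> nat \<Rightarrow> 'a" where
  "codeword n L V W l = (\<Sum>i\<in>{1..n}. V i l * W i)"

text \<open>Receiver j can recover message k: the message value is uniquely determined by
  the codeword and the side-information messages (equivalently, a decoding function exists).\<close>

definition recovers ::
  "nat \<Rightarrow> nat \<Rightarrow> (nat \<Rightarrow> nat set) \<Rightarrow> (nat \<Rightarrow> nat \<Rightarrow> 'a::field) \<Rightarrow> nat \<Rightarrow> nat \<Rightarrow> bool" where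
  "recovers n L S V j k \<longleftrightarrow>
     (\<forall>W W' :: nat \<Rightarrow> 'a.
        (\<forall>l<L. codeword n L V W l = codeword n L V W' l) \<longrightarrow>
        (\<forall>m\<in>S j. W m = W' m) \<longrightarrow> W k = W' k)"

definition valid_linear_code ::
  "nat \<Rightarrow> nat \<Rightarrow> (nat \<Rightarrow> nat set) \<Rightarrow> (nat \<Rightarrow> nat set) \<Rightarrow> nat \<Rightarrow> (nat \<Rightarrow> nat \<Rightarrow> 'a::field) \<Rightarrow> bool" where
  "valid_linear_code n T D S L V \<longleftrightarrow> (\<forall>j\<in>{1..T}. \<forall>k\<in>D j. recovers n L S V j k)"

definition I6 :: "nat \<Rightarrow> nat set" where
  "I6 j = (if j = 1 then {4} else if j = 2 then {1,3} else if j = 3 then {1}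
           else if j = 4 then {} else if j = 5 then {1,3,4} else if j = 6 then {1,2,4} else {})"

definition D6 :: "nat \<Rightarrow> nat set" where
  "D6 j = {j}"

definition S6 :: "nat \<Rightarrow> nat set" where
  "S6 j = {1..6} - ({j} \<union> I6 j)"

end

theory Submission
  imports Defs
begin

definition det3 :: "(nat \<Rightarrow> 'a::field) \<Rightarrow> (nat \<Rightarrow> 'a) \<Rightarrow> (nat \<Rightarrow> 'a) \<Rightarrow> 'a" where
  "det3 a b c = a 0 * (b 1 * c 2 - b 2 * c 1) - a 1 * (b 0 * c 2 - b 2 * c 0) + a 2 * (b 0 * c 1 - b 1 * c 0)"

lemma cramer:
  fixes a b c d :: "nat \<Rightarrow> 'a::field"
  assumes "l < 3"
  shows "det3 a b c * d l = det3 d b c * a l + det3 a d c * b l + det3 a b d * c l"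
proof -
  have "l = 0 \<or> l = 1 \<or> l = 2" using assms by auto
  moreover have "?thesis" if "l = 0" unfolding det3_def that by algebra
  moreover have "?thesis" if "l = 1" unfolding det3_def that by algebra
  moreover have "?thesis" if "l = 2" unfolding det3_def that by algebra
  ultimately show ?thesis by blast
qed

lemma sum6: "(\<Sum>i\<in>{1..6::nat}. f i) = f 1 + f 2 + f 3 + f 4 + f 5 + (f 6 :: 'a::comm_monoid_add)"
  by (simp add: numeral_eq_Suc add_ac)

lemma S6_vals: "S6 1 = {2,3,5,6}" "S6 2 = {4,5,6}" "S6 3 = {2,4,5,6}" "S6 4 = {1,2,3,5,6}"
  "S6 5 = {2,6}" "S6 6 = {3,5}"
  by (auto simp: S6_def I6_def)

lemma recv:
  fixes V :: "nat \<Rightarrow> nat \<Rightarrow> 'a::field"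
  assumes "valid_linear_code 6 6 D6 S6 3 V" "j \<in> {1..6}"
    "\<And>l. l < 3 \<Longrightarrow> (\<Sum>i\<in>{1..6}. V i l * X i) = 0"
    "\<forall>m\<in>S6 j. X m = 0"
  shows "X j = 0"
proof -
  have "recovers 6 3 S6 V j j" using assms(1,2) by (simp add: valid_linear_code_def D6_def)
  then have "(\<forall>l<3. codeword 6 3 V X l = codeword 6 3 V (\<lambda>_. 0) l) \<longrightarrow>
        (\<forall>m\<in>S6 j. X m = (\<lambda>_. 0) m) \<longrightarrow> X j = (\<lambda>_. (0::'a)) j"
    unfolding recovers_def by blast
  then show ?thesis using assms(3,4) by (simp add: codeword_def)
qed

lemma partb:
  fixes V :: "nat \<Rightarrow> nat \<Rightarrow> 'a::field"
  assumes vc: "valid_linear_code 6 6 D6 S6 3 V"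
  shows False
proof -
  note R = recv[OF vc]
  have A: "det3 (V 1) (V 3) (V 4) = 0"
  proof -
    let ?X = "\<lambda>i::nat. if i = 5 then det3 (V 1) (V 3) (V 4) else if i = 1 then - det3 (V 5) (V 3) (V 4)
       else if i = 3 then - det3 (V 1) (V 5) (V 4) else if i = 4 then - det3 (V 1) (V 3) (V 5) else 0"
    have "?X 5 = 0"
    proof (rule R[where j=5 and X="?X"])
      fix l :: nat assume "l < 3"
      from cramer[OF this, of "V 1" "V 3" "V 4" "V 5"]
      show "(\<Sum>i\<in>{1..6}. V i l * ?X i) = 0" unfolding sum6 by (simp add: algebra_simps)
    qed (auto simp: S6_def I6_def)
    then show ?thesis by simp
  qed
  have B: "det3 (V 1) (V 2) (V 4) = 0"
  proof -
    let ?X = "\<lambda>i::nat. if i = 6 then det3 (V 1) (V 2) (V 4) else if i = 1 then - det3 (V 6) (V 2) (V 4)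
       else if i = 2 then - det3 (V 1) (V 6) (V 4) else if i = 4 then - det3 (V 1) (V 2) (V 6) else 0"
    have "?X 6 = 0"
    proof (rule R[where j=6 and X="?X"])
      fix l :: nat assume "l < 3"
      from cramer[OF this, of "V 1" "V 2" "V 4" "V 6"]
      show "(\<Sum>i\<in>{1..6}. V i l * ?X i) = 0" unfolding sum6 by (simp add: algebra_simps)
    qed (auto simp: S6_def I6_def)
    then show ?thesis by simp
  qed
  have C: "\<exists>k<3. V 1 k \<noteq> 0"
  proof (rule ccontr)
    assume h: "\<not> (\<exists>k<3. V 1 k \<noteq> 0)"
    let ?X = "\<lambda>i::nat. if i = 1 then (1::'a) else 0"
    have "?X 1 = 0"
    proof (rule R[where j=1 and X="?X"])
      fix l :: nat assume "l < 3"
      then show "(\<Sum>i\<in>{1..6}. V i l * ?X i) = 0" using h unfolding sum6 by simp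
    qed (auto simp: S6_def I6_def)
    then show False by simp
  qed
  define n where "n k = V 1 ((k+1) mod 3) * V 3 ((k+2) mod 3) - V 3 ((k+1) mod 3) * V 1 ((k+2) mod 3)" for k
  have D: "\<exists>k<3. n k \<noteq> 0"
  proof (rule ccontr)
    assume h: "\<not> (\<exists>k<3. n k \<noteq> 0)"
    from C obtain k where k: "k < 3" "V 1 k \<noteq> 0" by auto
    have cr: "V 1 k * V 3 m = V 3 k * V 1 m" if "m < 3" for m
    proof -
      have "k = 0 \<or> k = 1 \<or> k = 2" "m = 0 \<or> m = 1 \<or> m = 2" using k that by auto
      moreover have "n 0 = 0" "n 1 = 0" "n 2 = 0" using h by auto
      ultimately show ?thesis unfolding n_def by (auto simp: algebra_simps numeral_2_eq_2)
    qed
    let ?X = "\<lambda>i::nat. if i = 3 then V 1 k else if i = 1 then - V 3 k else 0"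
    have "?X 3 = 0"
    proof (rule R[where j=3 and X="?X"])
      fix l :: nat assume "l < 3"
      from cr[OF this]
      show "(\<Sum>i\<in>{1..6}. V i l * ?X i) = 0" unfolding sum6 by (simp add: algebra_simps)
    qed (auto simp: S6_def I6_def)
    then show False using k by simp
  qed
  have E: "det3 (V 1) (V 3) (V 2) \<noteq> 0"
  proof
    assume h: "det3 (V 1) (V 3) (V 2) = 0"
    from D obtain k where k: "k < 3" "n k \<noteq> 0" by auto
    define e where "e l = (if l = k then (1::'a) else 0)" for l
    have ek: "det3 (V 1) (V 3) e \<noteq> 0"
    proof -
      have "k = 0 \<or> k = 1 \<or> k = 2" using k by auto
      then show ?thesis using k(2) unfolding det3_def e_def n_def
        by (auto simp: algebra_simps numeral_2_eq_2)
    qed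
    let ?X = "\<lambda>i::nat. if i = 2 then det3 (V 1) (V 3) e else if i = 1 then det3 e (V 3) (V 2)
       else if i = 3 then det3 (V 1) e (V 2) else 0"
    have "?X 2 = 0"
    proof (rule R[where j=2 and X="?X"])
      fix l :: nat assume "l < 3"
      from cramer[OF this, of "V 1" "V 3" "V 2" e] h
      show "(\<Sum>i\<in>{1..6}. V i l * ?X i) = 0" unfolding sum6 by (simp add: algebra_simps)
    qed (auto simp: S6_def I6_def)
    then show False using ek by simp
  qed
  define \<Delta> where "\<Delta> = det3 (V 1) (V 3) (V 2)"
  have B': "det3 (V 1) (V 4) (V 2) = 0" using B unfolding det3_def by (simp add: algebra_simps)
  have F: "\<Delta> * V 4 l = det3 (V 4) (V 3) (V 2) * V 1 l" if "l < 3" for l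
    using cramer[OF that, of "V 1" "V 3" "V 2" "V 4"] A B' unfolding \<Delta>_def
    by (simp add: algebra_simps)
  have G: "det3 (V 4) (V 3) (V 2) = 0"
  proof -
    let ?X = "\<lambda>i::nat. if i = 1 then det3 (V 4) (V 3) (V 2) else if i = 4 then - \<Delta> else 0"
    have "?X 1 = 0"
    proof (rule R[where j=1 and X="?X"])
      fix l :: nat assume "l < 3"
      from F[OF this]
      show "(\<Sum>i\<in>{1..6}. V i l * ?X i) = 0" unfolding sum6 by (simp add: algebra_simps)
    qed (auto simp: S6_def I6_def)
    then show ?thesis by simp
  qed
  have H: "V 4 l = 0" if "l < 3" for l
    using F[OF that] G E unfolding \<Delta>_def by simp
  let ?X = "\<lambda>i::nat. if i = 4 then (1::'a) else 0"
  have "?X 4 = 0"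
  proof (rule R[where j=4 and X="?X"])
    fix l :: nat assume "l < 3"
    then show "(\<Sum>i\<in>{1..6}. V i l * ?X i) = 0" using H unfolding sum6 by simp
  qed (auto simp: S6_def I6_def)
  then show False by simp
qed


lemma Interf_eq: "j \<in> {1..6} \<Longrightarrow> Interf 6 S6 j j = I6 j"
  unfolding Interf_def S6_def I6_def
  by (auto simp: numeral_eq_Suc)

lemma parta: "\<not> has_acyclic_subset4 6 6 D6 S6"
proof
  assume "has_acyclic_subset4 6 6 D6 S6"
  then obtain i :: "nat \<Rightarrow> nat" where inj: "inj_on i {..<4}" and rng: "i ` {..<4} \<subseteq> {1..6}"
    and c: "\<forall>k<4. \<exists>j\<in>{1..6}. i k \<in> D6 j \<and> i ` {..<k} \<subseteq> Interf 6 S6 j (i k)"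
    unfolding has_acyclic_subset4_def by blast
  have c': "i ` {..<k} \<subseteq> I6 (i k)" if "k < 4" for k
  proof -
    from c that obtain j where "j \<in> {1..6}" "i k \<in> D6 j" "i ` {..<k} \<subseteq> Interf 6 S6 j (i k)" by blast
    then show ?thesis using Interf_eq by (simp add: D6_def)
  qed
  have r: "i k \<in> {1..6}" if "k < 4" for k using rng that by auto
  have d: "i a \<noteq> i b" if "a < 4" "b < 4" "a \<noteq> b" for a b
    using inj that by (auto simp: inj_on_def)
  have h1: "i 0 \<in> I6 (i 1)" using c'[of 1] by auto
  have h2: "i 0 \<in> I6 (i 2)" "i 1 \<in> I6 (i 2)" using c'[of 2] by (auto simp: lessThan_nat_numeral)
  have h3: "i 0 \<in> I6 (i 3)" "i 1 \<in> I6 (i 3)" "i 2 \<in> I6 (i 3)"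
    using c'[of 3] by (auto simp: lessThan_nat_numeral)
  have d01: "i 0 \<noteq> i 1" and d02: "i 0 \<noteq> i 2" and d12: "i 1 \<noteq> i 2" using d by auto
  have "i 3 = 5 \<or> i 3 = 6"
    using h3 d01 d02 d12 by (auto simp: I6_def split: if_splits)
  then show False
    using h1 h2 h3 d01 d02 d12 by (auto simp: I6_def split: if_splits)
qed

theorem mainTheorem10:
  shows "\<not> has_acyclic_subset4 6 6 D6 S6 \<and>
         (\<forall>V :: nat \<Rightarrow> nat \<Rightarrow> 'a::{field,finite}. \<not> valid_linear_code 6 6 D6 S6 3 V)"
  using parta partb by blast

end
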